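(* Let $P_1=(x_1,v_1)$ and $P_2=(x_2,v_2)$ be points of $\mathcal{H}$, let $\theta_i=\delta(x_i,v_i)$ for $i=1,2$, and suppose $0\le\theta_1\le\theta_2<2\pi$ and $1\le v_1\le v_2$. Then $d_H((0,1),P_1)\le d_H((0,1),P_2)$.
   Context: Let $\mathcal{H}=\{(x,v)\in\mathbb{R}^2:v\ge0\}$ and $d_H$ the Riemannian distance on $\mathcal{H}$ induced by $ds^2=v^{-1}(dx^2+dv^2)$ on the open upper half-plane (extended to the boundary). For $v\ge0$, $0<|\delta|<2\pi$, $f(v,\delta)=\frac{(v+1)(\delta-\sin\delta)+2\sqrt v(2\sin\frac\delta2-\delta\cos\frac\delta2)}{2\sin^2\frac\delta2}$, $f(v,0)=0$, and $\delta(x,v)$ denotes the unique $\delta\in(-2\pi,2\pi)$ with $f(v,\delta)=x$. *)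

theory Defs
  imports "HOL-Analysis.Analysis"
begin

definition Hplane :: "(real \<times> real) set" where
  "Hplane = {p. snd p \<ge> 0}"

text \<open>At boundary points (v = 0) a non-zero velocity has infinite cost; such times
  form a null set for admissible curves in any case of finite length.\<close>
definition hspeed :: "(real \<times> real) \<Rightarrow> (real \<times> real) \<Rightarrow> ennreal" where
  "hspeed p w = (if snd p > 0 then ennreal (norm w / sqrt (snd p))
                 else if w = 0 then 0 else \<infinity>)"

definition hlength :: "(real \<Rightarrow> real \<times> real) \<Rightarrow> ennreal" where
  "hlength \<gamma> = (\<integral>\<^sup>+ t \<in> {0..1}. hspeed (\<gamma> t) (vector_derivative \<gamma> (at t)) \<partial>lborel)"

definition hpaths :: "(real \<times> real) \<Rightarrow> (real \<times> real) \<Rightarrow> (real \<Rightarrow> real \<times> real) set" where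
  "hpaths P Q = {\<gamma>. \<gamma> piecewise_C1_differentiable_on {0..1} \<and> \<gamma> ` {0..1} \<subseteq> Hplane
                    \<and> \<gamma> 0 = P \<and> \<gamma> 1 = Q}"

definition dH :: "(real \<times> real) \<Rightarrow> (real \<times> real) \<Rightarrow> ennreal" where
  "dH P Q = (INF \<gamma> \<in> hpaths P Q. hlength \<gamma>)"

definition fdelta :: "real \<Rightarrow> real \<Rightarrow> real" where
  "fdelta v d = (if d = 0 then 0 else
     ((v + 1) * (d - sin d) + 2 * sqrt v * (2 * sin (d / 2) - d * cos (d / 2)))
       / (2 * (sin (d / 2))^2))"

definition delta :: "real \<Rightarrow> real \<Rightarrow> real" where
  "delta x v = (THE d. -2*pi < d \<and> d < 2*pi \<and> fdelta v d = x)"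

end

theory Submission imports Defs "HOL-Real_Asymp.Real_Asymp" begin


definition N1 :: "real \<Rightarrow> real" where "N1 t = t - sin t * cos t"
definition N2 :: "real \<Rightarrow> real" where "N2 t = sin t - t * cos t"
definition N3 :: "real \<Rightarrow> real" where "N3 t = t * (1 + cos t * cos t) - 2 * sin t * cos t"
definition AA :: "real \<Rightarrow> real" where "AA t = N1 t / (sin t)^2"
definition BB :: "real \<Rightarrow> real" where "BB t = N2 t / (sin t)^2"
definition gg :: "real \<Rightarrow> real \<Rightarrow> real" where "gg v t = (v+1) * AA t + 2 * sqrt v * BB t"

lemma fdelta_eq: "fdelta v d = gg v (d/2)"
proof (cases "d = 0")
  case True then show ?thesis by (simp add: fdelta_def gg_def AA_def BB_def N1_def N2_def)
next
  case False
  define t where "t = d/2"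
  have dd: "d = 2*t" by (simp add: t_def)
  have s: "sin d = 2 * sin t * cos t" using sin_double[of t] dd by simp
  have "fdelta v d = ((v + 1) * (2*t - 2 * sin t * cos t) + 2 * sqrt v * (2 * sin t - 2*t * cos t))
       / (2 * (sin t)^2)"
    unfolding fdelta_def using False by (simp add: s t_def)
  also have "\<dots> = gg v t"
    by (cases "sin t = 0") (simp_all add: gg_def AA_def BB_def N1_def N2_def field_simps)
  finally show ?thesis by (simp add: t_def)
qed

lemma N1_deriv: "DERIV N1 x :> 2 * (sin x * sin x)"
proof -
  have "DERIV N1 x :> 1 - (cos x * cos x - sin x * sin x)"
    unfolding N1_def by (auto intro!: derivative_eq_intros)
  moreover have "1 - (cos x * cos x - sin x * sin x) = 2 * (sin x * sin x)"
    using sin_cos_squared_add3[of x] by linarith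
  ultimately show ?thesis by simp
qed

lemma N2_deriv: "DERIV N2 x :> x * sin x"
  unfolding N2_def by (auto intro!: derivative_eq_intros simp: algebra_simps)

lemma N3_deriv: "DERIV N3 x :> sin x * (2 * N2 x + sin x)"
proof -
  have "DERIV N3 x :> (1 + cos x * cos x) + x * (- sin x * cos x + - sin x * cos x)
        - 2 * (cos x * cos x - sin x * sin x)"
    unfolding N3_def by (auto intro!: derivative_eq_intros simp: algebra_simps)
  moreover have "(1 + cos x * cos x) + x * (- sin x * cos x + - sin x * cos x)
        - 2 * (cos x * cos x - sin x * sin x) = sin x * (2 * N2 x + sin x)"
    using sin_cos_squared_add3[of x] unfolding N2_def by (simp add: algebra_simps)
  ultimately show ?thesis by simp
qed

lemma cont_of_deriv: "(\<And>x. DERIV f x :> f' x) \<Longrightarrow> continuous_on S f"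
  by (meson DERIV_isCont continuous_at_imp_continuous_on)

lemma N2_pos: assumes "0 < t" "t < pi" shows "0 < N2 t"
proof -
  have "N2 0 < N2 t"
  proof (rule DERIV_pos_imp_increasing_open[OF assms(1)])
    fix x assume "0 < x" "x < t"
    then show "\<exists>y. DERIV N2 x :> y \<and> 0 < y"
      using N2_deriv[of x] sin_gt_zero[of x] assms by (intro exI[of _ "x * sin x"]) auto
  qed (rule cont_of_deriv[OF N2_deriv])
  then show ?thesis by (simp add: N2_def)
qed

lemma N1_pos: assumes "0 < t" "t < pi" shows "0 < N1 t"
proof -
  have "N1 0 < N1 t"
  proof (rule DERIV_pos_imp_increasing_open[OF assms(1)])
    fix x assume "0 < x" "x < t"
    then show "\<exists>y. DERIV N1 x :> y \<and> 0 < y"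
      using N1_deriv[of x] sin_gt_zero[of x] assms by (intro exI[of _ "2 * (sin x * sin x)"]) auto
  qed (rule cont_of_deriv[OF N1_deriv])
  then show ?thesis by (simp add: N1_def)
qed

lemma N3_pos: assumes "0 < t" "t < pi" shows "0 < N3 t"
proof -
  have "N3 0 < N3 t"
  proof (rule DERIV_pos_imp_increasing_open[OF assms(1)])
    fix x assume "0 < x" "x < t"
    then show "\<exists>y. DERIV N3 x :> y \<and> 0 < y"
      using N3_deriv[of x] sin_gt_zero[of x] N2_pos[of x] assms
      by (intro exI[of _ "sin x * (2 * N2 x + sin x)"]) auto
  qed (rule cont_of_deriv[OF N3_deriv])
  then show ?thesis by (simp add: N3_def)
qed

lemma sin2_deriv: "DERIV (\<lambda>t. (sin t)^2) x :> 2 * sin x * cos x"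
  by (auto intro!: derivative_eq_intros)

lemma AA_deriv: assumes "sin x \<noteq> 0"
  shows "DERIV AA x :> (2 * (sin x * sin x) * (sin x)^2 - N1 x * (2 * sin x * cos x)) / ((sin x)^2 * (sin x)^2)"
proof -
  have e: "AA = (\<lambda>t. N1 t / (sin t)^2)" by (simp add: AA_def[abs_def])
  show ?thesis unfolding e
    by (rule DERIV_divide[OF N1_deriv sin2_deriv]) (use assms in simp)
qed

lemma BB_deriv: assumes "sin x \<noteq> 0"
  shows "DERIV BB x :> (x * sin x * (sin x)^2 - N2 x * (2 * sin x * cos x)) / ((sin x)^2 * (sin x)^2)"
proof -
  have e: "BB = (\<lambda>t. N2 t / (sin t)^2)" by (simp add: BB_def[abs_def])
  show ?thesis unfolding e
    by (rule DERIV_divide[OF N2_deriv sin2_deriv]) (use assms in simp)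
qed

lemma AA_num: "2 * (sin x * sin x) * (sin x)^2 - N1 x * (2 * sin x * cos x) = 2 * sin x * N2 x"
proof -
  have "2 * (sin x * sin x) * (sin x)^2 - N1 x * (2 * sin x * cos x)
     = 2 * sin x * sin x * (cos x * cos x + sin x * sin x) - 2 * x * sin x * cos x"
    unfolding N1_def power2_eq_square by algebra
  also have "\<dots> = 2 * sin x * sin x - 2 * x * sin x * cos x" by (subst sin_cos_squared_add3) simp
  also have "\<dots> = 2 * sin x * N2 x" by (simp add: N2_def algebra_simps)
  finally show ?thesis .
qed

lemma BB_num: "x * sin x * (sin x)^2 - N2 x * (2 * sin x * cos x) = sin x * N3 x"
proof -
  have "x * sin x * (sin x)^2 - N2 x * (2 * sin x * cos x)
     = x * sin x * (cos x * cos x + sin x * sin x) + x * sin x * cos x * cos x - 2 * sin x * sin x * cos x"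
    unfolding N2_def power2_eq_square by algebra
  also have "\<dots> = x * sin x + x * sin x * cos x * cos x - 2 * sin x * sin x * cos x" by (subst sin_cos_squared_add3) simp
  also have "\<dots> = sin x * N3 x" by (simp add: N3_def algebra_simps)
  finally show ?thesis .
qed

lemma AA_strict: assumes "0 < s" "s < t" "t < pi" shows "AA s < AA t"
proof (rule DERIV_pos_imp_increasing_open[OF assms(2)])
  fix x assume x: "s < x" "x < t"
  then have sx: "0 < sin x" using assms by (intro sin_gt_zero) auto
  have p: "0 < 2 * sin x * N2 x" using sx N2_pos[of x] x assms by auto
  have d0: "DERIV AA x :> (2 * (sin x * sin x) * (sin x)^2 - N1 x * (2 * sin x * cos x)) / ((sin x)^2 * (sin x)^2)"
    using sx by (intro AA_deriv) simp
  have d: "DERIV AA x :> (2 * sin x * N2 x) / ((sin x)^2 * (sin x)^2)"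
    using d0 by (simp only: AA_num)
  show "\<exists>y. DERIV AA x :> y \<and> 0 < y"
    using d p sx by (intro exI[of _ "(2 * sin x * N2 x) / ((sin x)^2 * (sin x)^2)"]) (auto intro!: divide_pos_pos)
next
  show "continuous_on {s..t} AA"
  proof (rule continuous_at_imp_continuous_on, rule ballI)
    fix x assume "x \<in> {s..t}"
    then have "0 < sin x" using assms by (intro sin_gt_zero) auto
    then show "isCont AA x" by (intro DERIV_isCont[OF AA_deriv]) simp
  qed
qed

lemma BB_strict: assumes "0 < s" "s < t" "t < pi" shows "BB s < BB t"
proof (rule DERIV_pos_imp_increasing_open[OF assms(2)])
  fix x assume x: "s < x" "x < t"
  then have sx: "0 < sin x" using assms by (intro sin_gt_zero) auto
  have p: "0 < sin x * N3 x" using sx N3_pos[of x] x assms by auto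
  have d0: "DERIV BB x :> (x * sin x * (sin x)^2 - N2 x * (2 * sin x * cos x)) / ((sin x)^2 * (sin x)^2)"
    using sx by (intro BB_deriv) simp
  have d: "DERIV BB x :> (sin x * N3 x) / ((sin x)^2 * (sin x)^2)"
    using d0 by (simp only: BB_num)
  show "\<exists>y. DERIV BB x :> y \<and> 0 < y"
    using d p sx by (intro exI[of _ "(sin x * N3 x) / ((sin x)^2 * (sin x)^2)"]) (auto intro!: divide_pos_pos)
next
  show "continuous_on {s..t} BB"
  proof (rule continuous_at_imp_continuous_on, rule ballI)
    fix x assume "x \<in> {s..t}"
    then have "0 < sin x" using assms by (intro sin_gt_zero) auto
    then show "isCont BB x" by (intro DERIV_isCont[OF BB_deriv]) simp
  qed
qed

lemma AA_pos: "0 < t \<Longrightarrow> t < pi \<Longrightarrow> 0 < AA t"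
  using N1_pos[of t] sin_gt_zero[of t] by (auto simp: AA_def intro!: divide_pos_pos)
lemma BB_pos: "0 < t \<Longrightarrow> t < pi \<Longrightarrow> 0 < BB t"
  using N2_pos[of t] sin_gt_zero[of t] by (auto simp: BB_def intro!: divide_pos_pos)

lemma AA_lim0: "(AA \<longlongrightarrow> 0) (at_right 0)"
  unfolding AA_def[abs_def] N1_def by real_asymp
lemma BB_lim0: "(BB \<longlongrightarrow> 0) (at_right 0)"
  unfolding BB_def[abs_def] N2_def by real_asymp
lemma AA_limpi: "filterlim AA at_top (at_left pi)"
  unfolding AA_def[abs_def] N1_def by real_asymp

lemma neg_div: "(b - a) / c = - ((a - b) / (c::real))"
  by (cases "c = 0") (simp_all add: field_simps)
lemma AA_odd: "AA (-t) = - AA t" using neg_div[of "sin t * cos t" t "(sin t)^2"] by (simp add: AA_def N1_def)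
lemma BB_odd: "BB (-t) = - BB t" using neg_div[of "t * cos t" "sin t" "(sin t)^2"] by (simp add: BB_def N2_def)
lemma gg_odd: "gg v (-t) = - gg v t" by (simp add: gg_def AA_odd BB_odd)
lemma gg_0: "gg v 0 = 0" by (simp add: gg_def AA_def BB_def N1_def N2_def)

lemma gg_pos: "0 \<le> v \<Longrightarrow> 0 < t \<Longrightarrow> t < pi \<Longrightarrow> 0 < gg v t"
  using AA_pos[of t] BB_pos[of t] unfolding gg_def
  by (intro add_pos_nonneg) auto

lemma gg_mono: assumes "0 \<le> v" "0 < s" "s < t" "t < pi" shows "gg v s < gg v t"
proof -
  have "(v+1) * AA s < (v+1) * AA t" using AA_strict[OF assms(2-4)] assms(1) by simp
  moreover have "2 * sqrt v * BB s \<le> 2 * sqrt v * BB t" using BB_strict[OF assms(2-4)] assms(1)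
    by (intro mult_left_mono) auto
  ultimately show ?thesis unfolding gg_def by linarith
qed

lemma gg_strict: assumes "0 \<le> v" "-pi < s" "s < t" "t < pi" shows "gg v s < gg v t"
proof -
  consider "0 < s" | "s = 0" | "s < 0" "0 < t" | "s < 0" "t = 0" | "t < 0" by linarith
  then show ?thesis
  proof cases
    case 1 then show ?thesis using gg_mono assms by auto
  next
    case 2 then show ?thesis using gg_pos[of v t] gg_0 assms by auto
  next
    case 3 then show ?thesis using gg_pos[of v t] gg_pos[of v "-s"] gg_odd[of v s] assms by auto
  next
    case 4 then show ?thesis using gg_pos[of v "-s"] gg_odd[of v s] gg_0 assms by auto
  next
    case 5 then have "gg v (-t) < gg v (-s)" using gg_mono[of v "-t" "-s"] assms by auto
    then show ?thesis by (simp add: gg_odd)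
  qed
qed

lemma gg_cont: assumes "0 < a" "b < pi" shows "continuous_on {a..b} (gg v)"
proof (rule continuous_at_imp_continuous_on, rule ballI)
  fix x assume "x \<in> {a..b}"
  then have "0 < sin x" using assms by (intro sin_gt_zero) auto
  then have "isCont AA x" "isCont BB x" by (intro DERIV_isCont[OF AA_deriv] DERIV_isCont[OF BB_deriv], simp)+
  then show "isCont (gg v) x" unfolding gg_def[abs_def] by (intro continuous_intros)
qed

lemma gg_exists: assumes "0 \<le> v" "0 < x" shows "\<exists>t. 0 < t \<and> t < pi \<and> gg v t = x"
proof -
  have "((\<lambda>t. (v+1) * AA t + 2 * sqrt v * BB t) \<longlongrightarrow> (v+1) * 0 + 2 * sqrt v * 0) (at_right 0)"
    by (intro tendsto_intros AA_lim0 BB_lim0)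
  then have "((gg v) \<longlongrightarrow> 0) (at_right 0)" by (simp add: gg_def[abs_def])
  then have ev1: "eventually (\<lambda>t. gg v t < x) (at_right 0)" using assms(2) by (rule order_tendstoD(2))
  have "eventually (\<lambda>t. t \<in> {0<..<pi}) (at_right 0)" by (rule eventually_at_right_real) simp
  with ev1 have "eventually (\<lambda>t. gg v t < x \<and> t \<in> {0<..<pi}) (at_right 0)" by (rule eventually_conj)
  then obtain t0 where t0: "gg v t0 < x" "0 < t0" "t0 < pi"
    using eventually_happens'[OF trivial_limit_at_right_real[of "0::real"]] by auto
  have ev2: "eventually (\<lambda>t. x + 1 \<le> AA t) (at_left pi)" using AA_limpi by (simp add: filterlim_at_top)
  have "eventually (\<lambda>t. t \<in> {0<..<pi}) (at_left pi)" by (rule eventually_at_left_real) simp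
  with ev2 have "eventually (\<lambda>t. x + 1 \<le> AA t \<and> t \<in> {0<..<pi}) (at_left pi)" by (rule eventually_conj)
  then obtain t1 where t1: "x + 1 \<le> AA t1" "0 < t1" "t1 < pi"
    using eventually_happens'[OF trivial_limit_at_left_real[of "pi::real"]] by auto
  have "AA t1 \<le> (v+1) * AA t1" using AA_pos[OF t1(2,3)] assms(1) by simp
  moreover have "0 \<le> 2 * sqrt v * BB t1" using BB_pos[OF t1(2,3)] assms(1) by simp
  ultimately have g1: "x < gg v t1" using t1 unfolding gg_def by linarith
  have "t0 < t1"
  proof (rule ccontr)
    assume "\<not> t0 < t1"
    then have "gg v t1 \<le> gg v t0" using gg_mono[of v t1 t0] t0 t1 assms by (cases "t1 = t0") auto
    then show False using g1 t0 by linarith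
  qed
  then obtain t where "t0 \<le> t" "t \<le> t1" "gg v t = x"
    using IVT'[of "gg v" t0 x t1] gg_cont[of t0 t1 v] t0 t1 g1 by auto
  then show ?thesis using t0 t1 by (intro exI[of _ t]) auto
qed

lemma delta_prop: assumes "0 \<le> v"
  shows "-2*pi < delta x v \<and> delta x v < 2*pi \<and> fdelta v (delta x v) = x"
proof -
  have ex: "\<exists>d. -2*pi < d \<and> d < 2*pi \<and> fdelta v d = x"
  proof -
    consider "x = 0" | "0 < x" | "x < 0" by linarith
    then show ?thesis
    proof cases
      case 1 then show ?thesis by (intro exI[of _ 0]) (simp add: fdelta_def)
    next
      case 2
      then obtain t where "0 < t" "t < pi" "gg v t = x" using gg_exists assms by blast
      then show ?thesis by (intro exI[of _ "2*t"]) (auto simp: fdelta_eq)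
    next
      case 3
      then obtain t where "0 < t" "t < pi" "gg v t = -x" using gg_exists[of v "-x"] assms by auto
      then show ?thesis by (intro exI[of _ "-2*t"]) (auto simp: fdelta_eq gg_odd)
    qed
  qed
  have un: "d1 = d2" if "-2*pi < d1 \<and> d1 < 2*pi \<and> fdelta v d1 = x"
     "-2*pi < d2 \<and> d2 < 2*pi \<and> fdelta v d2 = x" for d1 d2
  proof (rule ccontr)
    assume ne: "d1 \<noteq> d2"
    have "gg v (d1/2) = gg v (d2/2)" using that by (simp add: fdelta_eq)
    moreover have "gg v (d1/2) \<noteq> gg v (d2/2)"
    proof (cases "d1 < d2")
      case True then show ?thesis using gg_strict[of v "d1/2" "d2/2"] that assms by auto
    next
      case False then have "d2 < d1" using ne by auto
      then show ?thesis using gg_strict[of v "d2/2" "d1/2"] that assms by auto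
    qed
    ultimately show False by simp
  qed
  have "\<exists>!d. -2*pi < d \<and> d < 2*pi \<and> fdelta v d = x" using ex un by blast
  then show ?thesis unfolding delta_def by (rule theI')
qed

lemma gg_nonneg: "0 \<le> v \<Longrightarrow> 0 \<le> t \<Longrightarrow> t < pi \<Longrightarrow> 0 \<le> gg v t"
  using gg_pos[of v t] gg_0[of v] by (cases "t = 0") auto

lemma gg_le: "0 \<le> v \<Longrightarrow> 0 \<le> s \<Longrightarrow> s \<le> t \<Longrightarrow> t < pi \<Longrightarrow> gg v s \<le> gg v t"
  using gg_strict[of v s t] by (cases "s = t") auto

lemma gg_scale:
  assumes "1 \<le> v1" "v1 \<le> v2" "0 \<le> t" "t < pi"
  shows "gg v1 t * sqrt v2 \<le> gg v2 t * sqrt v1"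
    and "v1 < v2 \<Longrightarrow> 0 < t \<Longrightarrow> gg v1 t * sqrt v2 < gg v2 t * sqrt v1"
proof -
  define s1 where "s1 = sqrt v1"
  define s2 where "s2 = sqrt v2"
  have v1: "v1 = s1^2" and v2: "v2 = s2^2" using assms by (simp_all add: s1_def s2_def)
  have s1: "1 \<le> s1" and s12: "s1 \<le> s2" using assms by (simp_all add: s1_def s2_def)
  have eq: "gg v1 t * sqrt v2 - gg v2 t * sqrt v1 = AA t * ((s1 - s2) * (s1 * s2 - 1))"
    unfolding gg_def s1_def[symmetric] s2_def[symmetric] v1 v2 using s1 s12
    by (simp add: algebra_simps power2_eq_square)
  have A0: "0 \<le> AA t" using AA_pos[of t] assms by (cases "t = 0") (auto simp: AA_def N1_def)
  have p1: "1 \<le> s1 * s2" using mult_mono[of 1 s1 1 s2] s1 s12 by auto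
  have "(s1 - s2) * (s1 * s2 - 1) \<le> 0" using s1 s12 p1
    by (intro mult_nonpos_nonneg) auto
  then have "AA t * ((s1 - s2) * (s1 * s2 - 1)) \<le> 0" using A0 by (simp add: mult_nonneg_nonpos)
  then show "gg v1 t * sqrt v2 \<le> gg v2 t * sqrt v1" using eq by linarith
  assume lt: "v1 < v2" "0 < t"
  then have "s1 < s2" by (simp add: s1_def s2_def)
  then have p2: "1 < s1 * s2" using mult_le_less_imp_less[of 1 s1 1 s2] s1 by auto
  have "(s1 - s2) * (s1 * s2 - 1) < 0" using \<open>s1 < s2\<close> p2
    by (intro mult_neg_pos) auto
  then have "AA t * ((s1 - s2) * (s1 * s2 - 1)) < 0" using AA_pos[of t] lt assms by (simp add: mult_pos_neg)
  then show "gg v1 t * sqrt v2 < gg v2 t * sqrt v1" using eq by linarith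
qed



lemma cont_of_deriv2: "(\<And>x. DERIV f x :> f' x) \<Longrightarrow> continuous_on S f"
  by (meson DERIV_isCont continuous_at_imp_continuous_on)

lemma hspeed_contract:
  fixes k k' :: "real \<Rightarrow> real" and c :: real
  assumes p: "0 \<le> snd p"
    and kpos: "\<And>u. 0 < u \<Longrightarrow> 0 < k u"
    and cA: "\<And>u. 0 \<le> u \<Longrightarrow> c^2 * u \<le> k u"
    and cB: "\<And>u. 0 \<le> u \<Longrightarrow> (k' u)^2 * u \<le> k u"
  shows "hspeed (c * fst p, k (snd p)) (c * fst w, k' (snd p) * snd w) \<le> hspeed p w"
proof (cases "0 < snd p")
  case True
  define u where "u = snd p"
  have u: "0 < u" using True by (simp add: u_def)
  have K: "0 < k u" using kpos u by simp
  define X where "X = (c * fst w)^2 + (k' u * snd w)^2"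
  define W where "W = (fst w)^2 + (snd w)^2"
  have X0: "0 \<le> X" and W0: "0 \<le> W" by (simp_all add: X_def W_def)
  have nX: "norm (c * fst w, k' u * snd w) = sqrt X" by (simp add: norm_Pair X_def)
  have nW: "norm w = sqrt W" by (cases w) (simp add: norm_Pair W_def)
  have "X * u \<le> W * k u"
  proof -
    have "X * u = (fst w)^2 * (c^2 * u) + (snd w)^2 * ((k' u)^2 * u)"
      by (simp add: X_def power_mult_distrib algebra_simps)
    also have "\<dots> \<le> (fst w)^2 * k u + (snd w)^2 * k u"
      using cA[of u] cB[of u] u by (intro add_mono mult_left_mono) auto
    also have "\<dots> = W * k u" by (simp add: W_def algebra_simps)
    finally show ?thesis .
  qed
  then have "X / k u \<le> W / u" using u K by (simp add: field_simps)
  then have "sqrt (X / k u) \<le> sqrt (W / u)" by simp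
  then have le: "sqrt X / sqrt (k u) \<le> sqrt W / sqrt u" by (simp add: real_sqrt_divide)
  show ?thesis unfolding hspeed_def using True K le
    by (simp add: u_def[symmetric] nX nW ennreal_leI)
next
  case False
  then have z: "snd p = 0" using p by simp
  show ?thesis
  proof (cases "w = 0")
    case True then show ?thesis by (simp add: hspeed_def zero_prod_def)
  next
    case False then show ?thesis using z by (simp add: hspeed_def)
  qed
qed

lemma C1_compose_nofin:
  assumes fg: "f C1_differentiable_on S" "g C1_differentiable_on (f ` S)"
  shows "(g \<circ> f) C1_differentiable_on S"
proof -
  have "\<And>x. x \<in> S \<Longrightarrow> g \<circ> f differentiable at x"
    by (meson C1_differentiable_on_eq assms differentiable_chain_at imageI)
  moreover have "continuous_on S (\<lambda>x. vector_derivative (g \<circ> f) (at x))"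
  proof (rule continuous_on_eq [of _ "\<lambda>x. vector_derivative f (at x) *\<^sub>R vector_derivative g (at (f x))"])
    show "continuous_on S (\<lambda>x. vector_derivative f (at x) *\<^sub>R vector_derivative g (at (f x)))"
      using fg
      apply (clarsimp simp add: C1_differentiable_on_eq)
      apply (rule Limits.continuous_on_scaleR, assumption)
      by (metis (mono_tags, lifting) continuous_at_imp_continuous_on continuous_on_compose continuous_on_cong differentiable_imp_continuous_within o_def)
    show "\<And>x. x \<in> S \<Longrightarrow> vector_derivative f (at x) *\<^sub>R vector_derivative g (at (f x)) = vector_derivative (g \<circ> f) (at x)"
      by (metis (mono_tags, opaque_lifting) C1_differentiable_on_eq fg imageI vector_derivative_chain_at)
  qed
  ultimately show ?thesis
    by (simp add: C1_differentiable_on_eq)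
qed

lemma contract:
  fixes k k' :: "real \<Rightarrow> real" and c x v :: real
  assumes kd: "\<And>u. (k has_real_derivative k' u) (at u)"
    and kc: "continuous_on UNIV k'"
    and k1: "k 1 = 1"
    and kpos: "\<And>u. 0 < u \<Longrightarrow> 0 < k u"
    and knn: "\<And>u. 0 \<le> u \<Longrightarrow> 0 \<le> k u"
    and cA: "\<And>u. 0 \<le> u \<Longrightarrow> c^2 * u \<le> k u"
    and cB: "\<And>u. 0 \<le> u \<Longrightarrow> (k' u)^2 * u \<le> k u"
  shows "dH (0,1) (c * x, k v) \<le> dH (0,1) (x, v)"
  unfolding dH_def
proof (rule INF_mono)
  fix \<gamma> assume "\<gamma> \<in> hpaths (0, 1) (x, v)"
  then have pc: "\<gamma> piecewise_C1_differentiable_on {0..1}" and img: "\<gamma> ` {0..1} \<subseteq> Hplane"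
    and g0: "\<gamma> 0 = (0,1)" and g1: "\<gamma> 1 = (x, v)" by (auto simp: hpaths_def)
  from pc have gc: "continuous_on {0..1} \<gamma>" and "\<exists>S. finite S \<and> \<gamma> C1_differentiable_on {0..1} - S"
    by (auto simp: piecewise_C1_differentiable_on_def)
  then obtain S where S: "finite S" "\<gamma> C1_differentiable_on {0..1} - S" by blast
  from S(2) obtain D where D: "\<forall>t\<in>{0..1} - S. (\<gamma> has_vector_derivative D t) (at t)"
    and Dc: "continuous_on ({0..1} - S) D"
    unfolding C1_differentiable_on_def by blast
  define \<eta> where "\<eta> t = (c * fst (\<gamma> t), k (snd (\<gamma> t)))" for t
  define E where "E t = (c * fst (D t), k' (snd (\<gamma> t)) * snd (D t))" for t
  have kcont: "continuous_on UNIV k" using kd by (rule cont_of_deriv2)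
  have Ed: "(\<eta> has_vector_derivative E t) (at t)" if t: "t \<in> {0..1} - S" for t
  proof -
    have dg: "(\<gamma> has_derivative (\<lambda>h. h *\<^sub>R D t)) (at t)" using D[rule_format, OF t] by (simp add: has_vector_derivative_def)
    have d1: "((\<lambda>t. fst (\<gamma> t)) has_real_derivative fst (D t)) (at t)"
      unfolding has_field_derivative_def by (rule has_derivative_eq_rhs[OF has_derivative_fst[OF dg]]) (auto simp: fun_eq_iff)
    have d2: "((\<lambda>t. snd (\<gamma> t)) has_real_derivative snd (D t)) (at t)"
      unfolding has_field_derivative_def by (rule has_derivative_eq_rhs[OF has_derivative_snd[OF dg]]) (auto simp: fun_eq_iff)
    have e1: "((\<lambda>t. c * fst (\<gamma> t)) has_real_derivative c * fst (D t)) (at t)"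
      by (rule DERIV_cmult[OF d1])
    have e2: "((\<lambda>t. k (snd (\<gamma> t))) has_real_derivative k' (snd (\<gamma> t)) * snd (D t)) (at t)"
      by (rule DERIV_chain2[OF kd d2])
    show ?thesis unfolding \<eta>_def[abs_def] E_def
      by (rule has_vector_derivative_Pair)
        (use e1 e2 in \<open>simp_all add: has_real_derivative_iff_has_vector_derivative\<close>)
  qed
  have Ec: "continuous_on ({0..1} - S) E"
  proof -
    have "continuous_on ({0..1} - S) \<gamma>" using gc by (rule continuous_on_subset) auto
    then have "continuous_on ({0..1} - S) (\<lambda>t. k' (snd (\<gamma> t)))"
      by (intro continuous_on_compose2[OF kc]) (auto intro: continuous_intros)
    then show ?thesis unfolding E_def[abs_def] using Dc by (intro continuous_intros)
  qed
  have etapc: "\<eta> piecewise_C1_differentiable_on {0..1}"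
    unfolding piecewise_C1_differentiable_on_def
  proof (intro conjI exI)
    show "continuous_on {0..1} \<eta>" unfolding \<eta>_def[abs_def]
      by (intro continuous_intros continuous_on_compose2[OF kcont] gc) auto
    show "finite S" by fact
    show "\<eta> C1_differentiable_on {0..1} - S" unfolding C1_differentiable_on_def
      using Ed Ec by blast
  qed
  have etaimg: "\<eta> ` {0..1} \<subseteq> Hplane"
  proof
    fix q assume "q \<in> \<eta> ` {0..1}"
    then obtain t where t: "t \<in> {0..1}" "q = \<eta> t" by auto
    then have "0 \<le> snd (\<gamma> t)" using img by (auto simp: Hplane_def image_subset_iff)
    then show "q \<in> Hplane" using t knn by (simp add: Hplane_def \<eta>_def)
  qed
  have eta_in: "\<eta> \<in> hpaths (0, 1) (c * x, k v)"
    using etapc etaimg g0 g1 k1 by (simp add: hpaths_def \<eta>_def)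
  have "hlength \<eta> \<le> hlength \<gamma>"
    unfolding hlength_def
  proof (rule nn_integral_mono_AE)
    have "AE t in lborel. t \<notin> S" using S(1) by (intro AE_not_in finite_imp_null_set_lborel)
    then show "AE t in lborel. hspeed (\<eta> t) (vector_derivative \<eta> (at t)) * indicator {0..1} t
        \<le> hspeed (\<gamma> t) (vector_derivative \<gamma> (at t)) * indicator {0..1} t"
    proof eventually_elim
      case (elim t)
      show ?case
      proof (cases "t \<in> {0..1}")
        case False then show ?thesis by simp
      next
        case True
        then have t: "t \<in> {0..1} - S" using elim by simp
        have v1: "vector_derivative \<eta> (at t) = E t" using Ed[OF t] by (rule vector_derivative_at)
        have v2: "vector_derivative \<gamma> (at t) = D t" using D[rule_format, OF t] by (rule vector_derivative_at)
        have p: "0 \<le> snd (\<gamma> t)" using img True by (auto simp: Hplane_def image_subset_iff)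
        have "hspeed (\<eta> t) (E t) \<le> hspeed (\<gamma> t) (D t)"
          unfolding \<eta>_def E_def by (rule hspeed_contract[OF p kpos cA cB])
        then show ?thesis using True by (simp add: v1 v2)
      qed
    qed
  qed
  then show "\<exists>n\<in>hpaths (0, 1) (c * x, k v). hlength n \<le> hlength \<gamma>" using eta_in by blast
qed



lemma piece_deriv:
  fixes a b p q L v2 u :: real
  assumes c1: "a * v2 + b = p * v2 + q" and c2: "a = p - q * L"
  shows "((\<lambda>u. if u \<in> {..v2} then a*u+b else p*u + q*exp(-L*(u-v2))) has_real_derivative
          (if u \<in> {..v2} then a else p - q*L*exp(-L*(u-v2)))) (at u)"
  unfolding has_real_derivative_iff_has_vector_derivative
proof (rule has_vector_derivative_If_within_closures[where S="{..v2}" and T="{v2<..}"])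
  show "u \<in> {..v2} \<union> {v2<..}" by auto
  show "UNIV = {..v2} \<union> {v2<..}" by auto
  fix x
  have "((\<lambda>u. a*u+b) has_real_derivative a) (at x)" by (auto intro!: derivative_eq_intros)
  then show "((\<lambda>u. a*u+b) has_vector_derivative a) (at x within {..v2} \<union> (closure {..v2} \<inter> closure {v2<..}))"
    by (auto simp: has_real_derivative_iff_has_vector_derivative intro: has_vector_derivative_at_within)
  have "((\<lambda>u. p*u + q*exp(-L*(u-v2))) has_real_derivative (p - q*L*exp(-L*(x-v2)))) (at x)"
    by (auto intro!: derivative_eq_intros simp: algebra_simps)
  then show "((\<lambda>u. p*u + q*exp(-L*(u-v2))) has_vector_derivative (p - q*L*exp(-L*(x-v2))))
     (at x within {v2<..} \<union> (closure {..v2} \<inter> closure {v2<..}))"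
    by (auto simp: has_real_derivative_iff_has_vector_derivative intro: has_vector_derivative_at_within)
  assume "x \<in> closure {..v2}" "x \<in> closure {v2<..}"
  then have "x = v2" by simp
  then show "a*x+b = p*x + q*exp(-L*(x-v2))" "a = p - q*L*exp(-L*(x-v2))" using c1 c2 by simp_all
qed

theorem lemma2p8:
  fixes x1 v1 x2 v2 \<theta>1 \<theta>2 :: real
  assumes "v1 \<ge> 0" and "v2 \<ge> 0"
    and "\<theta>1 = delta x1 v1" and "\<theta>2 = delta x2 v2"
    and "0 \<le> \<theta>1" and "\<theta>1 \<le> \<theta>2" and "\<theta>2 < 2*pi"
    and "1 \<le> v1" and "v1 \<le> v2"
  shows "dH (0, 1) (x1, v1) \<le> dH (0, 1) (x2, v2)"
proof -
  note th1 = assms(3) and th2 = assms(4)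
  define t1 where "t1 = \<theta>1 / 2"
  define t2 where "t2 = \<theta>2 / 2"
  have t: "0 \<le> t1" "t1 \<le> t2" "t2 < pi" using assms by (simp_all add: t1_def t2_def)
  have x1: "x1 = gg v1 t1" using delta_prop[OF assms(1), of x1] th1 by (simp add: fdelta_eq t1_def)
  have x2: "x2 = gg v2 t2" using delta_prop[OF assms(2), of x2] th2 by (simp add: fdelta_eq t2_def)
  have x1nn: "0 \<le> x1" using x1 gg_nonneg[of v1 t1] t assms by simp
  have x2nn: "0 \<le> x2" using x2 gg_nonneg[of v2 t2] t assms by simp
  have x1le: "x1 \<le> gg v1 t2" using x1 gg_le[of v1 t1 t2] t assms by simp
  have sc: "gg v1 t2 * sqrt v2 \<le> x2 * sqrt v1" using gg_scale(1)[of v1 v2 t2] x2 t assms by simp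
  have sv2: "0 < sqrt v2" and sv1: "0 < sqrt v1" using assms by auto
  have xs0: "x1 * sqrt v2 \<le> gg v1 t2 * sqrt v2" using x1le sv2 by (intro mult_right_mono) auto
  have xs: "x1 * sqrt v2 \<le> x2 * sqrt v1" using xs0 sc by linarith
  define c where "c = (if x2 = 0 then 0 else x1 / x2)"
  have c0: "0 \<le> c" using x1nn x2nn by (simp add: c_def)
  have cx: "c * x2 = x1"
  proof (cases "x2 = 0")
    case True
    then have "x1 * sqrt v2 \<le> 0" using xs by simp
    then have "x1 = 0" using x1nn sv2 by (simp add: mult_le_0_iff)
    then show ?thesis using True by (simp add: c_def)
  qed (simp add: c_def)
  have cs: "c * sqrt v2 \<le> sqrt v1"
  proof (cases "x2 = 0")
    case True then show ?thesis using sv1 by (simp add: c_def)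
  next
    case False
    then have "0 < x2" using x2nn by simp
    then show ?thesis using xs by (simp add: c_def field_simps)
  qed
  show ?thesis
  proof (cases "v1 = v2")
    case True
    have c1: "c \<le> 1" using cs sv2 True by (simp add: mult_le_cancel_right2)
    have "dH (0,1) (c * x2, (\<lambda>u. u) v2) \<le> dH (0,1) (x2, v2)"
    proof (rule contract[where k' = "\<lambda>u. 1"])
      show "\<And>u. ((\<lambda>u. u) has_real_derivative 1) (at u)" by (rule DERIV_ident)
      fix u :: real assume u: "0 \<le> u"
      have "c^2 \<le> 1" using c0 c1 by (simp add: power_le_one)
      then show "c^2 * u \<le> u" using u mult_right_mono[of "c^2" 1 u] by simp
    qed auto
    then show ?thesis using cx True by simp
  next
    case False
    then have lt: "v1 < v2" using assms by simp
    have v2g: "1 < v2" using lt assms by simp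
    have csl: "c * sqrt v2 < sqrt v1"
    proof (cases "x2 = 0")
      case True then show ?thesis using sv1 by (simp add: c_def)
    next
      case False
      then have x2p: "0 < x2" using x2nn by simp
      have "t2 \<noteq> 0" using False x2 gg_0 by auto
      then have "0 < t2" using t by simp
      then have "gg v1 t2 * sqrt v2 < x2 * sqrt v1" using gg_scale(2)[of v1 v2 t2] x2 t assms lt by simp
      then have "x1 * sqrt v2 < x2 * sqrt v1" using xs0 by linarith
      then show ?thesis using x2p by (simp add: c_def field_simps)
    qed
    have "(c * sqrt v2)^2 < (sqrt v1)^2"
      using csl c0 sv2 by (intro power_strict_mono) auto
    then have cv: "c^2 * v2 < v1" using assms by (simp add: power_mult_distrib)
    define m where "m = v1 - c^2 * v2"
    have m0: "0 < m" using cv by (simp add: m_def)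
    have c2le: "c^2 \<le> 1"
    proof -
      have "c^2 * v2 < 1 * v2" using cv lt by simp
      then show ?thesis using v2g by (simp add: mult_less_cancel_right)
    qed
    define \<alpha> where "\<alpha> = (v1 - 1) / (v2 - 1)"
    define \<beta> where "\<beta> = 1 - \<alpha>"
    have a0: "0 \<le> \<alpha>" using assms v2g by (simp add: \<alpha>_def)
    have a1: "\<alpha> < 1" using lt v2g by (simp add: \<alpha>_def)
    have b0: "0 < \<beta>" using a1 by (simp add: \<beta>_def)
    have h: "\<alpha> * (v2 - 1) = v1 - 1" using v2g by (simp add: \<alpha>_def)
    have h': "\<alpha> * v2 - \<alpha> = v1 - 1" using h by (simp add: right_diff_distrib)
    have kv2: "\<alpha> * v2 + \<beta> = v1" unfolding \<beta>_def using h' by linarith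
    show ?thesis
    proof (cases "c^2 \<le> \<alpha>")
      case True
      have "dH (0,1) (c * x2, (\<lambda>u. \<alpha> * u + \<beta>) v2) \<le> dH (0,1) (x2, v2)"
      proof (rule contract[where k' = "\<lambda>u. \<alpha>"])
        show "\<And>u. ((\<lambda>u. \<alpha> * u + \<beta>) has_real_derivative \<alpha>) (at u)"
          by (auto intro!: derivative_eq_intros)
        show "\<alpha> * 1 + \<beta> = 1" by (simp add: \<beta>_def)
        fix u :: real assume u: "0 \<le> u"
        show "0 \<le> \<alpha> * u + \<beta>" using a0 b0 u by simp
        have "c^2 * u \<le> \<alpha> * u" using True u by (rule mult_right_mono)
        then show "c^2 * u \<le> \<alpha> * u + \<beta>" using b0 by simp
        have "\<alpha>^2 \<le> \<alpha>" using mult_left_le[of \<alpha> \<alpha>] a0 a1 by (simp add: power2_eq_square)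
        then have "\<alpha>^2 * u \<le> \<alpha> * u" using u by (rule mult_right_mono)
        then show "\<alpha>^2 * u \<le> \<alpha> * u + \<beta>" using b0 by simp
      next
        fix u :: real assume "0 < u" then show "0 < \<alpha> * u + \<beta>" using a0 b0 by (simp add: add_nonneg_pos)
      qed auto
      then show ?thesis using cx kv2 by simp
    next
      case False
      then have ac: "\<alpha> < c^2" by simp
      define L where "L = (c^2 - \<alpha>) / m"
      have L0: "0 < L" using ac m0 by (simp add: L_def)
      have Lm: "m * L = c^2 - \<alpha>" using m0 by (simp add: L_def)
      define k where "k u = (if u \<in> {..v2} then \<alpha>*u+\<beta> else c^2*u + m*exp(-L*(u-v2)))" for u
      define k' where "k' u = c^2 - (c^2 - \<alpha>) * exp(-L * max 0 (u - v2))" for u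
      have kd: "(k has_real_derivative k' u) (at u)" for u
      proof -
        have "((\<lambda>u. if u \<in> {..v2} then \<alpha>*u+\<beta> else c^2*u + m*exp(-L*(u-v2))) has_real_derivative
          (if u \<in> {..v2} then \<alpha> else c^2 - m*L*exp(-L*(u-v2)))) (at u)"
          by (rule piece_deriv) (use kv2 Lm m_def in \<open>simp_all\<close>)
        moreover have "(if u \<in> {..v2} then \<alpha> else c^2 - m*L*exp(-L*(u-v2))) = k' u"
          using Lm by (auto simp: k'_def max_def)
        ultimately show ?thesis by (simp add: k_def[abs_def])
      qed
      have kA: "c^2 * u \<le> k u" if u: "0 \<le> u" for u
      proof (cases "u \<le> v2")
        case True
        have "(\<alpha> - c^2) * v2 \<le> (\<alpha> - c^2) * u" using True ac by (intro mult_left_mono_neg) auto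
        then have "c^2 * u + m \<le> \<alpha> * u + \<beta>" using kv2 by (simp add: m_def algebra_simps)
        then show ?thesis using True m0 by (simp add: k_def)
      next
        case False
        then show ?thesis using m0 by (simp add: k_def)
      qed
      have E: "0 < exp(-L * max 0 (u - v2)) \<and> exp(-L * max 0 (u - v2)) \<le> 1" for u
        using L0 by (simp add: mult_nonneg_nonneg)
      have kB: "(k' u)^2 * u \<le> k u" if u: "0 \<le> u" for u
      proof -
        have lo: "\<alpha> \<le> k' u"
        proof -
          have "(c^2 - \<alpha>) * exp(-L * max 0 (u - v2)) \<le> (c^2 - \<alpha>) * 1"
            using E[of u] ac by (intro mult_left_mono) auto
          then show ?thesis by (simp add: k'_def)
        qed
        have hi: "k' u \<le> c^2" using E[of u] ac by (simp add: k'_def)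
        have "(k' u)^2 \<le> (c^2)^2" using lo hi a0 by (intro power_mono) auto
        also have "\<dots> \<le> c^2" using mult_left_le[of "c^2" "c^2"] c2le by (simp add: power2_eq_square)
        finally have "(k' u)^2 * u \<le> c^2 * u" using u by (rule mult_right_mono)
        then show ?thesis using kA[OF u] by simp
      qed
      have kpos: "0 < k u" if "0 < u" for u
      proof (cases "u \<le> v2")
        case True then show ?thesis using a0 b0 that by (simp add: k_def add_nonneg_pos)
      next
        case False
        have p1: "0 \<le> c^2 * u" using that by simp
        have p2: "0 < m * exp(-L*(u-v2))" using m0 by simp
        show ?thesis using False add_nonneg_pos[OF p1 p2] by (simp add: k_def)
      qed
      have "dH (0,1) (c * x2, k v2) \<le> dH (0,1) (x2, v2)"
      proof (rule contract[where k' = k'])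
        show "\<And>u. (k has_real_derivative k' u) (at u)" by (rule kd)
        show "continuous_on UNIV k'" unfolding k'_def[abs_def] by (intro continuous_intros)
        show "k 1 = 1" using v2g by (simp add: k_def \<beta>_def)
        show "\<And>u. 0 < u \<Longrightarrow> 0 < k u" by (rule kpos)
        show "0 \<le> k u" if u: "0 \<le> u" for u
        proof (cases "u = 0")
          case True then show ?thesis using b0 assms(2) by (simp add: k_def)
        next
          case False then show ?thesis using kpos[of u] u by simp
        qed
        show "\<And>u. 0 \<le> u \<Longrightarrow> c^2 * u \<le> k u" by (rule kA)
        show "\<And>u. 0 \<le> u \<Longrightarrow> (k' u)^2 * u \<le> k u" by (rule kB)
      qed
      moreover have "k v2 = v1" using kv2 by (simp add: k_def)
      ultimately show ?thesis using cx by simp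
    qed
  qed
qed

end
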